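(* Let $a<b$ be real numbers and let $\tilde f:[a,b]^2\to\mathbb{C}$ be continuous. Define iterated kernels $\tilde f^{(1)}:=\tilde f$ and, for $n\ge 2$ and $a\le y\le x\le b$, $$\tilde f^{(n)}(x,y):=\int_y^x \tilde f(x,\zeta)\,\tilde f^{(n-1)}(\zeta,y)\,d\zeta ,$$ and set $\tilde r(x,y):=\sum_{n=1}^{\infty}\tilde f^{(n)}(x,y)$ for $a\le y\le x\le b$ (this series converges absolutely and uniformly). For each integer $N\ge1$ put $\Delta z:=(b-a)/N$, $z_k:=a+k\,\Delta z$ for $k=0,\dots,N$, and let $\mathsf F^{(N)}$ be the $(N+1)\times(N+1)$ lower triangular matrix with entries $\mathsf F^{(N)}_{i,k}=\tilde f(z_i,z_k)$ if $i\ge k$ and $0$ if $i<k$. Then, for all $N$ large enough, $\mathsf{Id}-\Delta z\,\mathsf F^{(N)}$ is invertible, and for every $a\le y< x\le b$ and every choice of indices $0\le j_N< i_N\le N$ with $z_{i_N}\to x$ and $z_{j_N}\to y$ as $N\to\infty$, $$\lim_{N\to\infty}\frac{1}{\Delta z}\Big(\mathsf{Id}-\Delta z\,\mathsf F^{(N)}\Big)^{-1}_{i_N,j_N}=\tilde r(x,y).$$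
   Context: Here $\tilde r(x,y)$ is the smooth (Heaviside) part of the Volterra resolvent $(1_\ast-f)^{\ast-1}=\sum_{n\ge0}f^{\ast n}$ of the kernel $f(x,y)=\tilde f(x,y)\Theta(x-y)$, where $\Theta$ is the Heaviside step function and $\ast$ is the Volterra composition $(f\ast l)(x,y)=\int_y^x \tilde f(x,\zeta)\tilde l(\zeta,y)\,d\zeta\,\Theta(x-y)$, with unit $1_\ast=\delta(x-y)$; thus $(1_\ast-f)^{\ast-1}(x,y)=\delta(x-y)+\tilde r(x,y)\Theta(x-y)$. $\mathsf{Id}$ denotes the identity matrix. *)

theory Defs
  imports "HOL-Analysis.Analysis" "Jordan_Normal_Form.Matrix"
begin

text \<open>Iterated kernels: kiter f 0 = f (the paper's f^(1)), kiter f (Suc n) = f^(n+2).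
  For y \<le> x, kiter f (Suc n) x y = integral over [y,x] of f x t * kiter f n t y.\<close>
fun kiter :: "(real \<Rightarrow> real \<Rightarrow> complex) \<Rightarrow> nat \<Rightarrow> real \<Rightarrow> real \<Rightarrow> complex" where
  "kiter f 0 x y = f x y"
| "kiter f (Suc n) x y = integral {y..x} (\<lambda>t. f x t * kiter f n t y)"

definition resolvent_kernel :: "(real \<Rightarrow> real \<Rightarrow> complex) \<Rightarrow> real \<Rightarrow> real \<Rightarrow> complex" where
  "resolvent_kernel f x y = (\<Sum>n. kiter f n x y)"

definition dz :: "real \<Rightarrow> real \<Rightarrow> nat \<Rightarrow> real" where
  "dz a b N = (b - a) / real N"

definition grid :: "real \<Rightarrow> real \<Rightarrow> nat \<Rightarrow> nat \<Rightarrow> real" where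
  "grid a b N k = a + real k * dz a b N"

definition Fmat :: "real \<Rightarrow> real \<Rightarrow> (real \<Rightarrow> real \<Rightarrow> complex) \<Rightarrow> nat \<Rightarrow> complex mat" where
  "Fmat a b f N = mat (N+1) (N+1) (\<lambda>(i,k). if k \<le> i then f (grid a b N i) (grid a b N k) else 0)"

definition IdMinusF :: "real \<Rightarrow> real \<Rightarrow> (real \<Rightarrow> real \<Rightarrow> complex) \<Rightarrow> nat \<Rightarrow> complex mat" where
  "IdMinusF a b f N = 1\<^sub>m (N+1) - complex_of_real (dz a b N) \<cdot>\<^sub>m Fmat a b f N"

definition mat_inv :: "complex mat \<Rightarrow> complex mat" where
  "mat_inv A = (THE B. B \<in> carrier_mat (dim_row A) (dim_row A) \<and> inverts_mat A B \<and> inverts_mat B A)"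

end

theory Submission
  imports Defs "Jordan_Normal_Form.Determinant"
begin


definition Tri :: "real \<Rightarrow> real \<Rightarrow> (real \<times> real) set" where
  "Tri a b = {p. a \<le> snd p \<and> snd p \<le> fst p \<and> fst p \<le> b}"

lemma Tri_alt: "Tri a b = ({a..b} \<times> {a..b}) \<inter> {p. snd p \<le> fst p}"
  unfolding Tri_def by auto

lemma compact_Tri: "compact (Tri a b)"
  unfolding Tri_alt
  by (intro compact_Int_closed compact_Times compact_Icc closed_Collect_le continuous_intros)

lemma integral_subst01:
  fixes g :: "real \<Rightarrow> complex"
  assumes "y \<le> x" "continuous_on {y..x} g"
  shows "integral {y..x} g = integral {0..1} (\<lambda>s. (x - y) *\<^sub>R g (y + s * (x - y)))"
proof -
  have "((\<lambda>s. (x - y) *\<^sub>R g (y + s*(x-y))) has_integral integral {y + 0*(x-y) .. y + 1*(x-y)} g) {0..1}"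
  proof (rule has_integral_substitution[where g = "\<lambda>s. y + s*(x-y)" and c=y and d=x])
    show "(\<lambda>s. y + s * (x - y)) ` {0..1} \<subseteq> {y..x}"
    proof
      fix z assume "z \<in> (\<lambda>s. y + s * (x - y)) ` {0..1}"
      then obtain s where s: "0 \<le> s" "s \<le> 1" "z = y + s * (x - y)" by auto
      have "s * (x - y) \<le> 1 * (x - y)" using s assms by (intro mult_right_mono) auto
      moreover have "0 \<le> s * (x - y)" using s assms by auto
      ultimately show "z \<in> {y..x}" using s by auto
    qed
  qed (use assms in \<open>auto intro!: derivative_eq_intros\<close>)
  then have H: "((\<lambda>s. (x - y) *\<^sub>R g (y + s*(x-y))) has_integral integral {y..x} g) {0..1}" by simp
  show ?thesis using integral_unique[OF H] by (rule sym)
qed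

lemma cont_step:
  fixes f k :: "real \<Rightarrow> real \<Rightarrow> complex"
  assumes f: "continuous_on ({a..b} \<times> {a..b}) (\<lambda>(x,y). f x y)"
    and k: "continuous_on (Tri a b) (\<lambda>(x,y). k x y)"
  shows "continuous_on (Tri a b) (\<lambda>(x,y). integral {y..x} (\<lambda>t. f x t * k t y))"
proof -
  define \<phi> where "\<phi> p s = (fst p - snd p) *\<^sub>R (f (fst p) (snd p + s*(fst p - snd p)) * k (snd p + s*(fst p - snd p)) (snd p))" for p s
  have mem: "snd p + s*(fst p - snd p) \<in> {snd p..fst p}" if "p \<in> Tri a b" "s \<in> {0..1}" for p s
  proof -
    have "s * (fst p - snd p) \<le> 1 * (fst p - snd p)" using that by (intro mult_right_mono) (auto simp: Tri_def)
    moreover have "0 \<le> s * (fst p - snd p)" using that by (auto simp: Tri_def)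
    ultimately show ?thesis by auto
  qed
  have i1: "(\<lambda>q. (fst (fst q), snd (fst q) + snd q * (fst (fst q) - snd (fst q)))) ` (Tri a b \<times> cbox 0 1) \<subseteq> {a..b} \<times> {a..b}"
  proof
    fix z assume "z \<in> (\<lambda>q. (fst (fst q), snd (fst q) + snd q * (fst (fst q) - snd (fst q)))) ` (Tri a b \<times> cbox 0 1)"
    then obtain x y s where z: "z = (x, y + s*(x-y))" and xy: "(x,y) \<in> Tri a b" and s: "s \<in> {0..1}" by auto
    from mem[OF xy s] have "y \<le> y + s * (x - y)" "y + s * (x - y) \<le> x" by auto
    with xy show "z \<in> {a..b} \<times> {a..b}" by (auto simp: Tri_def z)
  qed
  have i2: "(\<lambda>q. (snd (fst q) + snd q * (fst (fst q) - snd (fst q)), snd (fst q))) ` (Tri a b \<times> cbox 0 1) \<subseteq> Tri a b"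
  proof
    fix z assume "z \<in> (\<lambda>q. (snd (fst q) + snd q * (fst (fst q) - snd (fst q)), snd (fst q))) ` (Tri a b \<times> cbox 0 1)"
    then obtain x y s where z: "z = (y + s*(x-y), y)" and xy: "(x,y) \<in> Tri a b" and s: "s \<in> {0..1}" by auto
    from mem[OF xy s] have "y \<le> y + s * (x - y)" "y + s * (x - y) \<le> x" by auto
    with xy show "z \<in> Tri a b" by (auto simp: Tri_def z)
  qed
  have c1: "continuous_on (Tri a b \<times> cbox 0 1) (\<lambda>q. f (fst (fst q)) (snd (fst q) + snd q * (fst (fst q) - snd (fst q))))"
  proof -
    have "continuous_on (Tri a b \<times> cbox 0 1) (\<lambda>q. (fst (fst q), snd (fst q) + snd q * (fst (fst q) - snd (fst q))))"
      by (intro continuous_intros)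
    from continuous_on_compose2[OF f this i1] show ?thesis by simp
  qed
  have c2: "continuous_on (Tri a b \<times> cbox 0 1) (\<lambda>q. k (snd (fst q) + snd q * (fst (fst q) - snd (fst q))) (snd (fst q)))"
  proof -
    have "continuous_on (Tri a b \<times> cbox 0 1) (\<lambda>q. (snd (fst q) + snd q * (fst (fst q) - snd (fst q)), snd (fst q)))"
      by (intro continuous_intros)
    from continuous_on_compose2[OF k this i2] show ?thesis by simp
  qed
  have "continuous_on (Tri a b \<times> cbox 0 1) (\<lambda>(p, s). \<phi> p s)"
    unfolding \<phi>_def case_prod_beta using c1 c2 by (intro continuous_intros)
  then have "continuous_on (Tri a b) (\<lambda>p. integral (cbox 0 1) (\<phi> p))"
    by (rule integral_continuous_on_param)
  moreover have "integral (cbox 0 1) (\<phi> p) = (\<lambda>(x,y). integral {y..x} (\<lambda>t. f x t * k t y)) p"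
    if p: "p \<in> Tri a b" for p
  proof -
    obtain x y where xy: "p = (x,y)" by (cases p)
    have sub1: "(\<lambda>t. (x, t)) ` {y..x} \<subseteq> {a..b} \<times> {a..b}" using p xy by (auto simp: Tri_def)
    have sub2: "(\<lambda>t. (t, y)) ` {y..x} \<subseteq> Tri a b" using p xy by (auto simp: Tri_def)
    have "continuous_on {y..x} (\<lambda>t. f x t)"
      using continuous_on_compose2[OF f continuous_on_Pair[OF continuous_on_const continuous_on_id] sub1] by simp
    moreover have "continuous_on {y..x} (\<lambda>t. k t y)"
      using continuous_on_compose2[OF k continuous_on_Pair[OF continuous_on_id continuous_on_const] sub2] by simp
    ultimately have "continuous_on {y..x} (\<lambda>t. f x t * k t y)" by (intro continuous_intros)
    then have "integral {y..x} (\<lambda>t. f x t * k t y) = integral {0..1} (\<lambda>s. (x - y) *\<^sub>R (f x (y + s * (x - y)) * k (y + s * (x - y)) y))"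
      using p xy by (intro integral_subst01) (auto simp: Tri_def)
    then show ?thesis by (simp add: xy \<phi>_def[abs_def])
  qed
  ultimately show ?thesis using continuous_on_cong by (metis (no_types, lifting))
qed


lemma cont_slice:
  fixes f k :: "real \<Rightarrow> real \<Rightarrow> complex"
  assumes f: "continuous_on ({a..b} \<times> {a..b}) (\<lambda>(x,y). f x y)"
    and k: "continuous_on (Tri a b) (\<lambda>(x,y). k x y)"
    and p: "(x,y) \<in> Tri a b"
  shows "continuous_on {y..x} (\<lambda>t. f x t * k t y)"
proof -
  have sub1: "(\<lambda>t. (x, t)) ` {y..x} \<subseteq> {a..b} \<times> {a..b}" using p by (auto simp: Tri_def)
  have sub2: "(\<lambda>t. (t, y)) ` {y..x} \<subseteq> Tri a b" using p by (auto simp: Tri_def)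
  have "continuous_on {y..x} (\<lambda>t. f x t)"
    using continuous_on_compose2[OF f continuous_on_Pair[OF continuous_on_const continuous_on_id] sub1] by simp
  moreover have "continuous_on {y..x} (\<lambda>t. k t y)"
    using continuous_on_compose2[OF k continuous_on_Pair[OF continuous_on_id continuous_on_const] sub2] by simp
  ultimately show "continuous_on {y..x} (\<lambda>t. f x t * k t y)" by (intro continuous_intros)
qed

lemma integral_pow_shift:
  assumes "y \<le> (x::real)"
  shows "((\<lambda>t. (t - y)^n) has_integral (x - y)^(Suc n) / real (Suc n)) {y..x}"
proof -
  have "((\<lambda>t. (t - y)^n) has_integral ((\<lambda>t. (t - y)^(Suc n) / real (Suc n)) x - (\<lambda>t. (t - y)^(Suc n) / real (Suc n)) y)) {y..x}"
  proof (rule fundamental_theorem_of_calculus[OF assms])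
    fix t assume "t \<in> {y..x}"
    have d1: "((\<lambda>t. t - y) has_real_derivative 1) (at t within {y..x})"
      by (auto intro!: derivative_eq_intros)
    have "((\<lambda>t. (t - y)^(Suc n) / real (Suc n)) has_real_derivative (1 + real n) * (1 * (t - y)^n) / real (Suc n)) (at t within {y..x})"
      by (rule DERIV_cdivide, rule DERIV_power_Suc[OF d1])
    then have "((\<lambda>t. (t - y)^(Suc n) / real (Suc n)) has_real_derivative (t - y)^n) (at t within {y..x})"
      by simp
    then show "((\<lambda>t. (t - y)^(Suc n) / real (Suc n)) has_vector_derivative (t - y)^n) (at t within {y..x})"
      by (simp add: has_real_derivative_iff_has_vector_derivative)
  qed
  then show ?thesis by simp
qed

context
  fixes a b :: real and f :: "real \<Rightarrow> real \<Rightarrow> complex" and M :: real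
  assumes fc: "continuous_on ({a..b} \<times> {a..b}) (\<lambda>(x,y). f x y)"
    and Mpos: "M > 0" and fM: "\<And>x y. x \<in> {a..b} \<Longrightarrow> y \<in> {a..b} \<Longrightarrow> norm (f x y) \<le> M"
begin

lemma kiter_cont: "continuous_on (Tri a b) (\<lambda>(x,y). kiter f n x y)"
proof (induction n)
  case 0
  have "Tri a b \<subseteq> {a..b} \<times> {a..b}" by (auto simp: Tri_def)
  then show ?case using continuous_on_subset[OF fc] by simp
next
  case (Suc n)
  show ?case using cont_step[OF fc Suc] by simp
qed

lemma kiter_bound:
  assumes "(x,y) \<in> Tri a b"
  shows "norm (kiter f n x y) \<le> M^(Suc n) * (x - y)^n / fact n"
  using assms
proof (induction n arbitrary: x)
  case 0
  then show ?case using fM[of x y] by (auto simp: Tri_def)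
next
  case (Suc n)
  have yx: "y \<le> x" using Suc.prems by (auto simp: Tri_def)
  have int1: "(\<lambda>t. f x t * kiter f n t y) integrable_on {y..x}"
    by (rule integrable_continuous_interval, rule cont_slice[OF fc kiter_cont Suc.prems])
  have H: "((\<lambda>t. (M^(Suc (Suc n)) / fact n) * (t - y)^n) has_integral (M^(Suc (Suc n)) / fact n) * ((x - y)^(Suc n) / real (Suc n))) {y..x}"
    by (rule has_integral_mult_right, rule integral_pow_shift[OF yx])
  have "norm (kiter f (Suc n) x y) \<le> integral {y..x} (\<lambda>t. (M^(Suc (Suc n)) / fact n) * (t - y)^n)"
    unfolding kiter.simps
  proof (rule integral_norm_bound_integral[OF int1])
    show "(\<lambda>t. (M^(Suc (Suc n)) / fact n) * (t - y)^n) integrable_on {y..x}" using H by blast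
  next
    fix t assume t: "t \<in> {y..x}"
    then have tT: "(t, y) \<in> Tri a b" using Suc.prems by (auto simp: Tri_def)
    have "norm (f x t * kiter f n t y) = norm (f x t) * norm (kiter f n t y)" by (simp add: norm_mult)
    also have "\<dots> \<le> M * (M^(Suc n) * (t - y)^n / fact n)"
      using Suc.prems t tT Mpos by (intro mult_mono fM Suc.IH) (auto simp: Tri_def)
    also have "\<dots> = (M^(Suc (Suc n)) / fact n) * (t - y)^n" by simp
    finally show "norm (f x t * kiter f n t y) \<le> (M^(Suc (Suc n)) / fact n) * (t - y)^n" .
  qed
  also have "\<dots> = (M^(Suc (Suc n)) / fact n) * ((x - y)^(Suc n) / real (Suc n))"
    using H by (rule integral_unique)
  also have "\<dots> = M^(Suc (Suc n)) * (x - y)^(Suc n) / fact (Suc n)"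
    by (simp add: field_simps del: of_nat_Suc)
  finally show ?case .
qed

definition Bn :: "nat \<Rightarrow> real" where "Bn n = M^(Suc n) * (b - a)^n / fact n"

lemma summable_Bn: "summable Bn"
proof -
  have "summable (\<lambda>n. M * (inverse (fact n) * (M * (b - a))^n))"
    by (intro summable_mult summable_exp)
  moreover have "(\<lambda>n. M * (inverse (fact n) * (M * (b - a))^n)) = Bn"
    by (simp add: fun_eq_iff Bn_def power_mult_distrib divide_inverse mult_ac)
  ultimately show ?thesis by simp
qed

lemma kiter_Bn:
  assumes "(x,y) \<in> Tri a b"
  shows "norm (kiter f n x y) \<le> Bn n"
proof -
  have "(x - y)^n \<le> (b - a)^n" using assms by (intro power_mono) (auto simp: Tri_def)
  then have "M^(Suc n) * (x - y)^n / fact n \<le> M^(Suc n) * (b - a)^n / fact n"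
    using Mpos by (intro divide_right_mono mult_left_mono) auto
  then show ?thesis using kiter_bound[OF assms, of n] unfolding Bn_def by linarith
qed

lemma kiter_summable:
  assumes "(x,y) \<in> Tri a b"
  shows "summable (\<lambda>n. kiter f n x y)"
  by (rule summable_comparison_test'[OF summable_Bn kiter_Bn[OF assms]])

lemma r_cont: "continuous_on (Tri a b) (\<lambda>(x,y). resolvent_kernel f x y)"
proof -
  have ul: "uniform_limit (Tri a b) (\<lambda>n p. \<Sum>i<n. (\<lambda>(x,y). kiter f i x y) p)
      (\<lambda>p. \<Sum>i. (\<lambda>(x,y). kiter f i x y) p) sequentially"
    by (rule Weierstrass_m_test[OF _ summable_Bn]) (auto intro: kiter_Bn)
  have "continuous_on (Tri a b) (\<lambda>p. \<Sum>i. (\<lambda>(x,y). kiter f i x y) p)"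
    by (rule uniform_limit_theorem[OF _ ul]) (auto intro!: always_eventually continuous_on_sum kiter_cont)
  then show ?thesis by (simp add: resolvent_kernel_def case_prod_beta)
qed

lemma r_eq:
  assumes p: "(x,y) \<in> Tri a b"
  shows "resolvent_kernel f x y = f x y + integral {y..x} (\<lambda>t. f x t * resolvent_kernel f t y)"
proof -
  have yx: "y \<le> x" using p by (auto simp: Tri_def)
  have tT: "(t, y) \<in> Tri a b" if "t \<in> {y..x}" for t using p that by (auto simp: Tri_def)
  have ul: "uniform_limit {y..x} (\<lambda>n t. \<Sum>i<n. f x t * kiter f i t y)
      (\<lambda>t. \<Sum>i. f x t * kiter f i t y) sequentially"
  proof (rule Weierstrass_m_test[where M = "\<lambda>n. M * Bn n"])
    fix n t assume t: "t \<in> {y..x}"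
    have "norm (f x t * kiter f n t y) = norm (f x t) * norm (kiter f n t y)" by (simp add: norm_mult)
    also have "\<dots> \<le> M * Bn n" using t p tT[OF t] Mpos
      by (intro mult_mono fM kiter_Bn) (auto simp: Tri_def)
    finally show "norm (f x t * kiter f n t y) \<le> M * Bn n" .
  qed (intro summable_mult summable_Bn)
  have cont: "continuous_on {y..x} (\<lambda>t. \<Sum>i<n. f x t * kiter f i t y)" for n
    by (intro continuous_on_sum cont_slice[OF fc kiter_cont p])
  obtain I J where I: "\<And>n. ((\<lambda>t. \<Sum>i<n. f x t * kiter f i t y) has_integral I n) {y..x}"
    and J: "((\<lambda>t. \<Sum>i. f x t * kiter f i t y) has_integral J) {y..x}"
    and IJ: "I \<longlonglongrightarrow> J"
    using uniform_limit_integral[OF ul cont] by auto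
  have Ieq: "I = (\<lambda>n. \<Sum>i<n. kiter f (Suc i) x y)"
  proof (rule ext)
    fix n
    have "((\<lambda>t. \<Sum>i<n. f x t * kiter f i t y) has_integral (\<Sum>i<n. integral {y..x} (\<lambda>t. f x t * kiter f i t y))) {y..x}"
      by (intro has_integral_sum finite_lessThan integrable_integral integrable_continuous_interval cont_slice[OF fc kiter_cont p])
    then show "I n = (\<Sum>i<n. kiter f (Suc i) x y)" using I[of n] by (simp add: has_integral_unique)
  qed
  from IJ have "(\<lambda>i. kiter f (Suc i) x y) sums J" unfolding Ieq sums_def .
  moreover have "((\<lambda>t. f x t * resolvent_kernel f t y) has_integral J) {y..x}"
  proof -
    have "(\<Sum>i. f x t * kiter f i t y) = f x t * resolvent_kernel f t y" if "t \<in> {y..x}" for t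
      unfolding resolvent_kernel_def by (rule suminf_mult[OF kiter_summable[OF tT[OF that]]])
    then show ?thesis using has_integral_cong J by (metis (no_types, lifting))
  qed
  ultimately have S: "(\<lambda>i. kiter f (Suc i) x y) sums integral {y..x} (\<lambda>t. f x t * resolvent_kernel f t y)"
    by (simp add: integral_unique)
  have "resolvent_kernel f x y = (\<Sum>i. kiter f (Suc i) x y) + kiter f 0 x y"
    unfolding resolvent_kernel_def using suminf_split_head[OF kiter_summable[OF p]] by simp
  then show ?thesis using S by (simp add: sums_iff)
qed

end



lemma geom_id: "1 + (q - 1) * (\<Sum>k<i. q^k) = (q::real)^i"
  by (induction i) (auto simp: algebra_simps)

lemma disc_gron:
  fixes u \<rho> E :: "nat \<Rightarrow> complex" and g :: "nat \<Rightarrow> nat \<Rightarrow> complex" and c M K :: real and \<beta> :: complex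
  assumes c: "c > 0" "c * M \<le> 1/2" and M: "M \<ge> 0"
    and gM: "\<And>i k. k \<le> i \<Longrightarrow> i \<le> N \<Longrightarrow> norm (g i k) \<le> M"
    and hu: "\<And>i. j < i \<Longrightarrow> i \<le> N \<Longrightarrow> u i = g i j * \<beta> + c * (\<Sum>k\<in>{j<..i}. g i k * u k)"
    and hr: "\<And>i. j < i \<Longrightarrow> i \<le> N \<Longrightarrow> \<rho> i = g i j + c * (\<Sum>k\<in>{j<..i}. g i k * \<rho> k) + E i"
    and hK: "\<And>i. j < i \<Longrightarrow> i \<le> N \<Longrightarrow> M * norm (\<beta> - 1) + norm (E i) \<le> K"
  shows "j < i \<Longrightarrow> i \<le> N \<Longrightarrow> norm (u i - \<rho> i) \<le> 2 * K * (1 + 2*c*M)^i"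
proof (induction i rule: less_induct)
  case (less i)
  define q where "q = 1 + 2*c*M"
  have K0: "K \<ge> 0" using hK[OF less.prems] M by (smt (verit) mult_nonneg_nonneg norm_ge_zero)
  have q1: "q \<ge> 1" unfolding q_def using c M by simp
  have e: "u i - \<rho> i = g i j * (\<beta> - 1) + c * (\<Sum>k\<in>{j<..i}. g i k * (u k - \<rho> k)) - E i"
    using hu[OF less.prems] hr[OF less.prems]
    by (simp add: algebra_simps sum_subtractf)
  have "norm (\<Sum>k\<in>{j<..i}. g i k * (u k - \<rho> k)) \<le> (\<Sum>k\<in>{j<..i}. norm (g i k * (u k - \<rho> k)))"
    by (rule norm_sum)
  also have "\<dots> \<le> (\<Sum>k\<in>{j<..i}. M * norm (u k - \<rho> k))"
    using less.prems by (intro sum_mono) (auto simp: norm_mult intro!: mult_right_mono gM)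
  finally have s1: "norm (\<Sum>k\<in>{j<..i}. g i k * (u k - \<rho> k)) \<le> M * (\<Sum>k\<in>{j<..i}. norm (u k - \<rho> k))"
    by (simp add: sum_distrib_left)
  have split: "{j<..i} = insert i {j<..<i}" using less.prems by auto
  have s2: "(\<Sum>k\<in>{j<..i}. norm (u k - \<rho> k)) = norm (u i - \<rho> i) + (\<Sum>k\<in>{j<..<i}. norm (u k - \<rho> k))"
    unfolding split by simp
  have "(\<Sum>k\<in>{j<..<i}. norm (u k - \<rho> k)) \<le> (\<Sum>k\<in>{j<..<i}. 2 * K * q^k)"
    using less.prems by (intro sum_mono) (auto simp: q_def intro!: less.IH)
  also have "\<dots> \<le> (\<Sum>k<i. 2 * K * q^k)"
    using K0 q1 by (intro sum_mono2) auto
  finally have s3: "(\<Sum>k\<in>{j<..<i}. norm (u k - \<rho> k)) \<le> 2 * K * (\<Sum>k<i. q^k)"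
    by (simp add: sum_distrib_left)
  have nE: "norm (g i j * (\<beta> - 1)) \<le> M * norm (\<beta> - 1)"
    using less.prems by (auto simp: norm_mult intro!: mult_right_mono gM)
  have "norm (u i - \<rho> i) \<le> norm (g i j * (\<beta> - 1)) + norm (c * (\<Sum>k\<in>{j<..i}. g i k * (u k - \<rho> k))) + norm (E i)"
    unfolding e by (smt (verit) norm_triangle_ineq norm_triangle_ineq4)
  also have "norm (c * (\<Sum>k\<in>{j<..i}. g i k * (u k - \<rho> k))) \<le> c * (M * (\<Sum>k\<in>{j<..i}. norm (u k - \<rho> k)))"
    using c s1 by (simp add: norm_mult)
  finally have "norm (u i - \<rho> i) \<le> K + c * M * norm (u i - \<rho> i) + c * M * (\<Sum>k\<in>{j<..<i}. norm (u k - \<rho> k))"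
    using nE hK[OF less.prems] unfolding s2 by (simp add: algebra_simps)
  moreover have "c * M * norm (u i - \<rho> i) \<le> 1/2 * norm (u i - \<rho> i)"
    using c by (intro mult_right_mono) auto
  moreover have "c * M * (\<Sum>k\<in>{j<..<i}. norm (u k - \<rho> k)) \<le> c * M * (2 * K * (\<Sum>k<i. q^k))"
    using s3 c M by (intro mult_left_mono) auto
  ultimately have "norm (u i - \<rho> i) \<le> 2 * K * (1 + (q - 1) * (\<Sum>k<i. q^k))"
    unfolding q_def by (simp add: algebra_simps)
  then show ?case unfolding geom_id q_def .
qed

lemma riemann:
  fixes G :: "real \<Rightarrow> complex" and p0 c \<epsilon> :: real
  assumes c: "c > 0" and ji: "j \<le> i"
    and cont: "continuous_on {p0 + real j * c .. p0 + real i * c} G"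
    and close: "\<And>k t. j < k \<Longrightarrow> k \<le> i \<Longrightarrow> t \<in> {p0 + real (k - 1) * c .. p0 + real k * c} \<Longrightarrow>
          norm (G t - G (p0 + real k * c)) \<le> \<epsilon>"
  shows "norm (integral {p0 + real j * c .. p0 + real i * c} G - c * (\<Sum>k\<in>{j<..i}. G (p0 + real k * c)))
      \<le> real (i - j) * c * \<epsilon>"
  using ji cont close
proof (induction i rule: dec_induct)
  case base
  then show ?case by simp
next
  case (step n)
  define P where "P k = p0 + real k * c" for k
  have mono: "P k \<le> P k'" if "k \<le> k'" for k k' using c that by (simp add: P_def mult_right_mono)
  have cont': "continuous_on {P j..P (Suc n)} G" using step.prems by (simp add: P_def)
  have IH: "norm (integral {P j .. P n} G - c * (\<Sum>k\<in>{j<..n}. G (P k))) \<le> real (n - j) * c * \<epsilon>"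
    unfolding P_def
  proof (rule step.IH)
    show "continuous_on {p0 + real j * c..p0 + real n * c} G"
      using continuous_on_subset[OF cont'] mono[of n "Suc n"] by (auto simp: P_def)
  qed (use step in auto)
  have comb: "integral {P j..P n} G + integral {P n..P (Suc n)} G = integral {P j .. P (Suc n)} G"
    by (rule Henstock_Kurzweil_Integration.integral_combine) (use step.hyps mono[of j n] mono[of n "Suc n"] integrable_continuous_interval[OF cont'] in auto)
  have cont2: "continuous_on {P n..P (Suc n)} G"
    by (rule continuous_on_subset[OF cont']) (use mono[of j n] step.hyps in auto)
  have int2: "(\<lambda>t. G t - G (P (Suc n))) integrable_on {P n..P (Suc n)}"
    by (intro integrable_continuous_interval continuous_intros cont2)
  have "norm (integral {P n..P (Suc n)} (\<lambda>t. G t - G (P (Suc n)))) \<le> integral {P n..P (Suc n)} (\<lambda>t. \<epsilon>)"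
  proof (rule integral_norm_bound_integral[OF int2])
    fix t assume "t \<in> {P n..P (Suc n)}"
    then show "norm (G t - G (P (Suc n))) \<le> \<epsilon>" using step.prems(2)[of "Suc n" t] step.hyps by (simp add: P_def)
  qed auto
  also have "\<dots> = c * \<epsilon>" using c by (simp add: P_def algebra_simps)
  finally have L0: "norm (integral {P n..P (Suc n)} (\<lambda>t. G t - G (P (Suc n)))) \<le> c * \<epsilon>" .
  have "integral {P n..P (Suc n)} (\<lambda>t. G t - G (P (Suc n))) = integral {P n..P (Suc n)} G - integral {P n..P (Suc n)} (\<lambda>t. G (P (Suc n)))"
    by (rule integral_diff) (use integrable_continuous_interval[OF cont2] in auto)
  also have "integral {P n..P (Suc n)} (\<lambda>t. G (P (Suc n))) = c * G (P (Suc n))"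
    using c by (simp add: P_def scaleR_conv_of_real algebra_simps)
  finally have L: "norm (integral {P n..P (Suc n)} G - c * G (P (Suc n))) \<le> c * \<epsilon>"
    using L0 by simp
  have sumeq: "(\<Sum>k\<in>{j<..Suc n}. G (P k)) = (\<Sum>k\<in>{j<..n}. G (P k)) + G (P (Suc n))"
  proof -
    have "{j<..Suc n} = insert (Suc n) {j<..n}" using step.hyps by auto
    then show ?thesis by (simp add: add.commute)
  qed
  have "integral {P j .. P (Suc n)} G - c * (\<Sum>k\<in>{j<..Suc n}. G (P k)) =
      (integral {P j .. P n} G - c * (\<Sum>k\<in>{j<..n}. G (P k))) + (integral {P n..P (Suc n)} G - c * G (P (Suc n)))"
    using comb sumeq by (simp add: algebra_simps)
  then have "norm (integral {P j .. P (Suc n)} G - c * (\<Sum>k\<in>{j<..Suc n}. G (P k))) \<le> real (n - j) * c * \<epsilon> + c * \<epsilon>"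
    using IH L by (smt (verit) norm_triangle_ineq)
  also have "\<dots> = real (Suc n - j) * c * \<epsilon>" using step.hyps by (simp add: of_nat_diff algebra_simps)
  finally show ?case by (simp add: P_def)
qed



lemma IdMinusF_carrier: "IdMinusF a b f N \<in> carrier_mat (N+1) (N+1)"
  unfolding IdMinusF_def Fmat_def by auto

lemma IdMinusF_index:
  assumes "i < N+1" "k < N+1"
  shows "IdMinusF a b f N $$ (i,k) = (if i = k then 1 else 0) -
     complex_of_real (dz a b N) * (if k \<le> i then f (grid a b N i) (grid a b N k) else 0)"
  using assms unfolding IdMinusF_def Fmat_def by auto

lemma mat_inv_facts:
  assumes nz: "\<And>i. i \<le> N \<Longrightarrow> 1 - complex_of_real (dz a b N) * f (grid a b N i) (grid a b N i) \<noteq> 0"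
  shows "invertible_mat (IdMinusF a b f N)"
    and "mat_inv (IdMinusF a b f N) \<in> carrier_mat (N+1) (N+1)"
    and "IdMinusF a b f N * mat_inv (IdMinusF a b f N) = 1\<^sub>m (N+1)"
proof -
  let ?A = "IdMinusF a b f N"
  have Ac: "?A \<in> carrier_mat (N+1) (N+1)" by (rule IdMinusF_carrier)
  have "det ?A = prod_list (diag_mat ?A)"
    by (rule det_lower_triangular[OF _ Ac]) (auto simp: IdMinusF_index)
  also have "\<dots> \<noteq> 0"
    using nz Ac by (auto simp: diag_mat_def prod_list_zero_iff IdMinusF_index)
  finally have "?A \<in> Units (ring_mat TYPE(complex) (N+1) undefined)"
    by (intro det_non_zero_imp_unit[OF Ac])
  then obtain B where Bc: "B \<in> carrier_mat (N+1) (N+1)" and AB: "?A * B = 1\<^sub>m (N+1)" and BA: "B * ?A = 1\<^sub>m (N+1)"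
    unfolding Units_def ring_mat_simps by auto
  have dr: "dim_row ?A = N+1" using Ac by auto
  have P: "B \<in> carrier_mat (dim_row ?A) (dim_row ?A) \<and> inverts_mat ?A B \<and> inverts_mat B ?A"
    using Bc AB BA dr by (auto simp: inverts_mat_def)
  have uniq: "B' = B" if "B' \<in> carrier_mat (dim_row ?A) (dim_row ?A) \<and> inverts_mat ?A B' \<and> inverts_mat B' ?A" for B'
  proof -
    have B'c: "B' \<in> carrier_mat (N+1) (N+1)" and B'A: "B' * ?A = 1\<^sub>m (N+1)"
      using that dr by (auto simp: inverts_mat_def)
    have "B' = B' * (?A * B)" using B'c AB by simp
    also have "\<dots> = (B' * ?A) * B" using B'c Ac Bc by (simp add: assoc_mult_mat)
    also have "\<dots> = B" using B'A Bc by simp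
    finally show ?thesis .
  qed
  have inv: "mat_inv ?A = B" unfolding mat_inv_def
    apply (rule the_equality)
     apply (rule P)
    apply (erule uniq)
    done
  show "invertible_mat ?A" unfolding invertible_mat_def using P Ac by auto
  show "mat_inv ?A \<in> carrier_mat (N+1) (N+1)" using inv Bc by simp
  show "?A * mat_inv ?A = 1\<^sub>m (N+1)" using inv AB by simp
qed

lemma inv_rec:
  assumes Bc: "B \<in> carrier_mat (N+1) (N+1)" and AB: "IdMinusF a b f N * B = 1\<^sub>m (N+1)"
    and i: "i \<le> N" and j: "j \<le> N"
  shows "B $$ (i,j) = (if i = j then 1 else 0) +
      complex_of_real (dz a b N) * (\<Sum>k\<in>{..i}. f (grid a b N i) (grid a b N k) * B $$ (k,j))"
proof -
  let ?A = "IdMinusF a b f N"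
  let ?c = "complex_of_real (dz a b N)"
  let ?g = "\<lambda>k. f (grid a b N i) (grid a b N k)"
  have "(?A * B) $$ (i,j) = (\<Sum>k<N+1. ?A $$ (i,k) * B $$ (k,j))"
    using Bc IdMinusF_carrier[of a b f N] i j
    by (simp add: index_mult_mat scalar_prod_def lessThan_atLeast0)
  also have "\<dots> = (\<Sum>k<N+1. (if i = k then B $$ (k,j) else 0) - ?c * (if k \<le> i then ?g k * B $$ (k,j) else 0))"
    using i by (intro sum.cong) (auto simp: IdMinusF_index algebra_simps)
  also have "\<dots> = B $$ (i,j) - ?c * (\<Sum>k\<in>{..i}. ?g k * B $$ (k,j))"
  proof -
    have s1: "(\<Sum>k<N+1. if i = k then B $$ (k,j) else 0) = B $$ (i,j)" using i by (simp add: sum.delta)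
    have s2: "(\<Sum>k<N+1. if k \<le> i then ?g k * B $$ (k,j) else 0) = (\<Sum>k\<in>{..i}. ?g k * B $$ (k,j))"
      by (rule sum.mono_neutral_cong_right) (use i in auto)
    show ?thesis by (simp only: sum_subtractf sum_distrib_left[symmetric] s1 s2)
  qed
  finally have "B $$ (i,j) - ?c * (\<Sum>k\<in>{..i}. ?g k * B $$ (k,j)) = (if i = j then 1 else 0)"
    using AB i j by simp
  then show ?thesis by (simp add: algebra_simps)
qed



lemma dz_pos: "a < b \<Longrightarrow> N \<ge> 1 \<Longrightarrow> dz a b N > 0"
  by (simp add: dz_def)

lemma grid_mem: "a < b \<Longrightarrow> N \<ge> 1 \<Longrightarrow> k \<le> N \<Longrightarrow> grid a b N k \<in> {a..b}"
proof -
  assume ab: "a < b" and N: "N \<ge> 1" and k: "k \<le> N"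
  have "real k * ((b - a) / real N) \<le> real N * ((b - a) / real N)"
    using ab k by (intro mult_right_mono) auto
  also have "\<dots> = b - a" using N by simp
  finally show ?thesis using ab N by (auto simp: grid_def dz_def)
qed

lemma grid_mono: "a < b \<Longrightarrow> N \<ge> 1 \<Longrightarrow> k \<le> k' \<Longrightarrow> grid a b N k \<le> grid a b N k'"
  unfolding grid_def by (intro add_left_mono mult_right_mono) (auto simp: dz_def)

lemma N_dz: "N \<ge> 1 \<Longrightarrow> real N * dz a b N = b - a"
  by (simp add: dz_def)

context
  fixes a b :: real and f :: "real \<Rightarrow> real \<Rightarrow> complex" and M :: real
  assumes ab: "a < b"
    and fc: "continuous_on ({a..b} \<times> {a..b}) (\<lambda>(x,y). f x y)"
    and Mpos: "M > 0" and fM: "\<And>x y. x \<in> {a..b} \<Longrightarrow> y \<in> {a..b} \<Longrightarrow> norm (f x y) \<le> M"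
begin

lemma err_bound:
  assumes N: "N \<ge> 1" and cM: "dz a b N * M \<le> 1/2" and ji: "j < i" "i \<le> N" and \<eta>: "\<eta> \<ge> 0"
    and close: "\<And>i k t. j < k \<Longrightarrow> k \<le> i \<Longrightarrow> i \<le> N \<Longrightarrow> t \<in> {grid a b N (k-1)..grid a b N k} \<Longrightarrow>
        norm (f (grid a b N i) t * resolvent_kernel f t (grid a b N j)
          - f (grid a b N i) (grid a b N k) * resolvent_kernel f (grid a b N k) (grid a b N j)) \<le> \<eta>"
  shows "norm (mat_inv (IdMinusF a b f N) $$ (i,j) / complex_of_real (dz a b N)
      - resolvent_kernel f (grid a b N i) (grid a b N j))
    \<le> 2 * (2 * M * M * dz a b N + (b - a) * \<eta>) * exp (2 * M * (b - a))"
proof -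
  define c where "c = dz a b N"
  define z where "z = grid a b N"
  define B where "B = mat_inv (IdMinusF a b f N)"
  define g where "g i k = f (z i) (z k)" for i k
  define r where "r = resolvent_kernel f"
  have c0: "c > 0" using dz_pos[OF ab N] by (simp add: c_def)
  have zmem: "z k \<in> {a..b}" if "k \<le> N" for k using grid_mem[OF ab N that] by (simp add: z_def)
  have gM: "norm (g i k) \<le> M" if "k \<le> i" "i \<le> N" for i k
    using that zmem by (auto simp: g_def intro!: fM)
  have small: "norm (complex_of_real c * g k l) \<le> 1/2" if "l \<le> k" "k \<le> N" for k l
  proof -
    have "norm (complex_of_real c * g k l) = c * norm (g k l)" using c0 by (simp add: norm_mult)
    also have "\<dots> \<le> c * M" using gM[OF that] c0 by (intro mult_left_mono) auto
    finally show ?thesis using cM by (simp add: c_def)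
  qed
  have nz: "1 - complex_of_real (dz a b N) * f (grid a b N k) (grid a b N k) \<noteq> 0" if "k \<le> N" for k
  proof
    assume "1 - complex_of_real (dz a b N) * f (grid a b N k) (grid a b N k) = 0"
    then have "complex_of_real c * g k k = 1" by (simp add: c_def g_def z_def)
    with small[of k k] that show False by simp
  qed
  note facts = mat_inv_facts[of N a b f, OF nz]
  have rec: "B $$ (k,j) = (if k = j then 1 else 0) + complex_of_real c * (\<Sum>l\<in>{..k}. g k l * B $$ (l,j))"
    if "k \<le> N" for k
    using inv_rec[OF facts(2) facts(3) that, of j] ji by (simp add: B_def c_def g_def z_def)
  have zero: "B $$ (k,j) = 0" if "k < j" for k
    using that
  proof (induction k rule: less_induct)
    case (less k)
    have kN: "k \<le> N" using less.prems ji by auto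
    have "(\<Sum>l\<in>{..k}. g k l * B $$ (l,j)) = g k k * B $$ (k,j) + (\<Sum>l\<in>{..<k}. g k l * B $$ (l,j))"
      by (simp add: lessThan_Suc_atMost[symmetric])
    also have "(\<Sum>l\<in>{..<k}. g k l * B $$ (l,j)) = 0"
      using less by (intro sum.neutral) auto
    finally have s: "(\<Sum>l\<in>{..k}. g k l * B $$ (l,j)) = g k k * B $$ (k,j)" by simp
    have R: "B $$ (k,j) = complex_of_real c * (\<Sum>l\<in>{..k}. g k l * B $$ (l,j))"
      using rec[OF kN] less.prems by simp
    then have "B $$ (k,j) = complex_of_real c * (g k k * B $$ (k,j))" unfolding s .
    then have e: "complex_of_real c * g k k * B $$ (k,j) = B $$ (k,j)" by (metis mult.assoc)
    have "(1 - complex_of_real c * g k k) * B $$ (k,j) = B $$ (k,j) - complex_of_real c * g k k * B $$ (k,j)"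
      by (simp add: left_diff_distrib)
    then have "(1 - complex_of_real c * g k k) * B $$ (k,j) = 0" using e by simp
    moreover have "1 - complex_of_real c * g k k \<noteq> 0"
      using nz[OF kN] by (simp add: c_def g_def z_def)
    ultimately show ?case by simp
  qed
  define \<beta> where "\<beta> = B $$ (j,j)"
  have jN: "j \<le> N" using ji by auto
  have sumj: "(\<Sum>l\<in>{..j}. g j l * B $$ (l,j)) = g j j * \<beta>"
  proof -
    have "(\<Sum>l\<in>{..j}. g j l * B $$ (l,j)) = g j j * B $$ (j,j) + (\<Sum>l\<in>{..<j}. g j l * B $$ (l,j))"
      by (simp add: lessThan_Suc_atMost[symmetric])
    also have "(\<Sum>l\<in>{..<j}. g j l * B $$ (l,j)) = 0" using zero by (intro sum.neutral) auto
    finally show ?thesis by (simp add: \<beta>_def)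
  qed
  have beq: "\<beta> - 1 = complex_of_real c * g j j * \<beta>"
    using rec[OF jN] sumj by (simp add: \<beta>_def algebra_simps)
  have nb: "norm (\<beta> - 1) \<le> c * M * norm \<beta>"
  proof -
    have "norm (\<beta> - 1) = c * norm (g j j) * norm \<beta>" using c0 beq by (simp add: norm_mult)
    also have "\<dots> \<le> c * M * norm \<beta>" using c0 gM[OF order_refl jN] by (intro mult_right_mono mult_left_mono) auto
    finally show ?thesis .
  qed
  have "norm \<beta> \<le> 1 + norm (\<beta> - 1)" by (metis norm_triangle_sub norm_one add.commute)
  also have "\<dots> \<le> 1 + 1/2 * norm \<beta>"
    using nb cM mult_right_mono[OF cM norm_ge_zero[of \<beta>]] by (simp add: c_def)
  finally have nbeta: "norm \<beta> \<le> 2" by simp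
  have nb2: "norm (\<beta> - 1) \<le> 2 * c * M"
  proof -
    have "c * M * norm \<beta> \<le> c * M * 2" using nbeta c0 Mpos by (intro mult_left_mono) auto
    then show ?thesis using nb by simp
  qed
  define u where "u k = B $$ (k,j) / complex_of_real c" for k
  have Bu: "B $$ (k,j) = complex_of_real c * u k" for k using c0 by (simp add: u_def)
  have hu: "u i = g i j * \<beta> + complex_of_real c * (\<Sum>k\<in>{j<..i}. g i k * u k)" if "j < i" "i \<le> N" for i
  proof -
    have "(\<Sum>l\<in>{..i}. g i l * B $$ (l,j)) = (\<Sum>l\<in>{j..i}. g i l * B $$ (l,j))"
      by (rule sum.mono_neutral_cong_right) (use zero in auto)
    also have "{j..i} = insert j {j<..i}" using that by auto
    also have "(\<Sum>l\<in>insert j {j<..i}. g i l * B $$ (l,j)) = g i j * \<beta> + (\<Sum>l\<in>{j<..i}. g i l * B $$ (l,j))"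
      by (simp add: \<beta>_def)
    finally have "B $$ (i,j) = complex_of_real c * (g i j * \<beta> + (\<Sum>l\<in>{j<..i}. g i l * B $$ (l,j)))"
      using rec[OF that(2)] that by simp
    then have "u i = g i j * \<beta> + (\<Sum>l\<in>{j<..i}. g i l * B $$ (l,j))"
      using c0 by (simp add: u_def)
    then show ?thesis by (simp add: Bu sum_distrib_left algebra_simps)
  qed
  define \<rho> where "\<rho> k = r (z k) (z j)" for k
  define E where "E i = \<rho> i - g i j - complex_of_real c * (\<Sum>k\<in>{j<..i}. g i k * \<rho> k)" for i
  have hr: "\<rho> i = g i j + complex_of_real c * (\<Sum>k\<in>{j<..i}. g i k * \<rho> k) + E i" for i
    by (simp add: E_def)
  have Tmem: "(z i, z j) \<in> Tri a b" if "j \<le> i" "i \<le> N" for i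
    using that zmem[of i] zmem[of j] grid_mono[OF ab N that(1)] by (auto simp: Tri_def z_def)
  have hE: "norm (E i) \<le> (b - a) * \<eta>" if "j < i" "i \<le> N" for i
  proof -
    have T: "(z i, z j) \<in> Tri a b" using Tmem that by auto
    have req: "\<rho> i = g i j + integral {z j..z i} (\<lambda>t. f (z i) t * r t (z j))"
      unfolding \<rho>_def r_def g_def using r_eq[OF fc Mpos fM T] .
    have "E i = integral {a + real j * c .. a + real i * c} (\<lambda>t. f (z i) t * r t (z j))
        - complex_of_real c * (\<Sum>k\<in>{j<..i}. (\<lambda>t. f (z i) t * r t (z j)) (a + real k * c))"
      unfolding E_def req by (simp add: z_def grid_def c_def g_def \<rho>_def)
    also have "norm \<dots> \<le> real (i - j) * c * \<eta>"
    proof (rule riemann[OF c0])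
      show "continuous_on {a + real j * c..a + real i * c} (\<lambda>t. f (z i) t * r t (z j))"
        using cont_slice[OF fc r_cont[OF fc Mpos fM] T] by (simp add: z_def grid_def c_def r_def)
    next
      fix k t assume "j < k" "k \<le> i" "t \<in> {a + real (k - 1) * c..a + real k * c}"
      then show "norm (f (z i) t * r t (z j) - f (z i) (a + real k * c) * r (a + real k * c) (z j)) \<le> \<eta>"
        using close[of k i t] that by (simp add: z_def grid_def c_def r_def)
    qed (use that in auto)
    also have "\<dots> \<le> real N * c * \<eta>"
      using that c0 \<eta> by (intro mult_right_mono) auto
    also have "\<dots> = (b - a) * \<eta>" using N_dz[OF N] by (simp add: c_def)
    finally show ?thesis .
  qed
  define K where "K = 2 * M * M * c + (b - a) * \<eta>"
  have hK: "M * norm (\<beta> - 1) + norm (E i) \<le> K" if "j < i" "i \<le> N" for i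
  proof -
    have "M * norm (\<beta> - 1) \<le> M * (2 * c * M)" using nb2 Mpos by (intro mult_left_mono) auto
    then show ?thesis using hE[OF that] by (simp add: K_def algebra_simps)
  qed
  have main: "norm (u i - \<rho> i) \<le> 2 * K * (1 + 2*c*M)^i"
    by (rule disc_gron[of c M N g j u \<beta> \<rho> E K, OF c0 _ _ gM hu hr hK ji])
       (use cM Mpos in \<open>auto simp: c_def\<close>)
  have "(1 + 2*c*M)^i \<le> (1 + 2*c*M)^N"
    using ji c0 Mpos by (intro power_increasing) auto
  also have "\<dots> \<le> exp (2*c*M)^N"
    using c0 Mpos by (intro power_mono) (auto simp: exp_ge_add_one_self add.commute)
  also have "\<dots> = exp (2 * M * (b - a))"
  proof -
    have "real N * (2*c*M) = 2*M*(real N * c)" by (simp add: algebra_simps)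
    also have "\<dots> = 2*M*(b-a)" using N_dz[OF N] by (simp add: c_def)
    finally show ?thesis by (metis exp_of_nat_mult)
  qed
  finally have "2 * K * (1 + 2*c*M)^i \<le> 2 * K * exp (2 * M * (b - a))"
    using Mpos c0 \<eta> ab by (intro mult_left_mono) (auto simp: K_def)
  with main show ?thesis
    by (simp add: u_def \<rho>_def B_def r_def z_def K_def c_def)
qed

end



lemma dz_tendsto: "(\<lambda>N. dz a b N) \<longlonglongrightarrow> 0"
  unfolding dz_def by (rule lim_const_over_n)

lemma ev_small: "d > 0 \<Longrightarrow> \<forall>\<^sub>F N in sequentially. dz a b N < d"
  using order_tendstoD(2)[OF dz_tendsto] by blast

lemma nz_lemma:
  assumes ab: "a < b" and N: "N \<ge> 1" and cM: "dz a b N * M \<le> 1/2"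
    and fM: "\<And>x y. x \<in> {a..b} \<Longrightarrow> y \<in> {a..b} \<Longrightarrow> norm (f x y) \<le> M" and k: "k \<le> N"
  shows "1 - complex_of_real (dz a b N) * f (grid a b N k) (grid a b N k) \<noteq> 0"
proof
  assume h: "1 - complex_of_real (dz a b N) * f (grid a b N k) (grid a b N k) = 0"
  have c0: "dz a b N > 0" using dz_pos[OF ab N] .
  have "norm (complex_of_real (dz a b N) * f (grid a b N k) (grid a b N k)) = dz a b N * norm (f (grid a b N k) (grid a b N k))"
    using c0 by (simp add: norm_mult)
  also have "\<dots> \<le> dz a b N * M" using c0 grid_mem[OF ab N k] by (intro mult_left_mono fM) auto
  finally have "norm (complex_of_real (dz a b N) * f (grid a b N k) (grid a b N k)) \<le> 1/2" using cM by simp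
  moreover have "complex_of_real (dz a b N) * f (grid a b N k) (grid a b N k) = 1" using h by simp
  ultimately show False by simp
qed

lemma unif_err:
  assumes ab: "a < b"
    and fc: "continuous_on ({a..b} \<times> {a..b}) (\<lambda>(x,y). f x y)"
    and Mpos: "M > 0" and fM: "\<And>x y. x \<in> {a..b} \<Longrightarrow> y \<in> {a..b} \<Longrightarrow> norm (f x y) \<le> M"
    and Rpos: "R > 0" and rR: "\<And>x y. (x,y) \<in> Tri a b \<Longrightarrow> norm (resolvent_kernel f x y) \<le> R"
    and \<epsilon>: "\<epsilon> > 0"
  shows "\<forall>\<^sub>F N in sequentially. \<forall>i j. j < i \<and> i \<le> N \<longrightarrow>
      norm (mat_inv (IdMinusF a b f N) $$ (i,j) / complex_of_real (dz a b N)
        - resolvent_kernel f (grid a b N i) (grid a b N j)) < \<epsilon>"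
proof -
  define C where "C = exp (2 * M * (b - a))"
  have C0: "C > 0" by (simp add: C_def)
  define \<eta> where "\<eta> = \<epsilon> / (4 * (b - a) * C)"
  have \<eta>0: "\<eta> > 0" using ab C0 \<epsilon> by (simp add: \<eta>_def)
  have e\<eta>: "2 * ((b - a) * \<eta>) * C = \<epsilon> / 2" using ab C0 by (simp add: \<eta>_def field_simps)
  have ucf: "uniformly_continuous_on ({a..b} \<times> {a..b}) (\<lambda>(x,y). f x y)"
    by (rule compact_uniformly_continuous[OF fc]) (intro compact_Times compact_Icc)
  obtain d1 where d1: "d1 > 0" and hd1: "\<And>p p'. p \<in> {a..b} \<times> {a..b} \<Longrightarrow> p' \<in> {a..b} \<times> {a..b} \<Longrightarrow>
      dist p' p < d1 \<Longrightarrow> dist ((\<lambda>(x,y). f x y) p') ((\<lambda>(x,y). f x y) p) < \<eta> / (2 * R)"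
    using ucf[unfolded uniformly_continuous_on_def, rule_format, of "\<eta> / (2 * R)"] \<eta>0 Rpos by auto
  have ucr: "uniformly_continuous_on (Tri a b) (\<lambda>(x,y). resolvent_kernel f x y)"
    by (rule compact_uniformly_continuous[OF r_cont[OF fc Mpos fM] compact_Tri])
  have pos2: "\<eta> / (2 * M) > 0" using \<eta>0 Mpos by simp
  obtain d2 where d2: "d2 > 0" and hd2: "\<forall>p\<in>Tri a b. \<forall>p'\<in>Tri a b.
      dist p' p < d2 \<longrightarrow> dist ((\<lambda>(x,y). resolvent_kernel f x y) p') ((\<lambda>(x,y). resolvent_kernel f x y) p) < \<eta> / (2 * M)"
    using ucr[unfolded uniformly_continuous_on_def] pos2 by blast
  have ev1: "\<forall>\<^sub>F N in sequentially. N \<ge> 1" by (rule eventually_ge_at_top)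
  have ev2: "\<forall>\<^sub>F N in sequentially. dz a b N < 1 / (2 * M)" by (rule ev_small) (use Mpos in simp)
  have ev3: "\<forall>\<^sub>F N in sequentially. dz a b N < min d1 d2" by (rule ev_small) (use d1 d2 in simp)
  have ev4: "\<forall>\<^sub>F N in sequentially. dz a b N < \<epsilon> / (8 * M * M * C)" by (rule ev_small) (use Mpos C0 \<epsilon> in simp)
  show ?thesis using ev1 ev2 ev3 ev4
  proof eventually_elim
    case (elim N)
    then have N: "N \<ge> 1" and c0: "dz a b N > 0" using dz_pos[OF ab] by auto
    have cM: "dz a b N * M \<le> 1/2" using elim(2) Mpos by (simp add: field_simps)
    show ?case
    proof (intro allI impI)
      fix i j assume ij: "j < i \<and> i \<le> N"
      let ?z = "grid a b N"
      have close: "norm (f (?z i') t * resolvent_kernel f t (?z j)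
          - f (?z i') (?z k) * resolvent_kernel f (?z k) (?z j)) \<le> \<eta>"
        if k: "j < k" "k \<le> i'" "i' \<le> N" and t: "t \<in> {?z (k-1)..?z k}" for i' k t
      proof -
        have zk: "?z k - ?z (k-1) = dz a b N" using k by (simp add: grid_def of_nat_diff algebra_simps)
        have tk: "dist t (?z k) < min d1 d2"
          using t zk elim(3) by (auto simp: dist_real_def)
        have mi: "?z i' \<in> {a..b}" "?z k \<in> {a..b}" "?z j \<in> {a..b}" "?z (k-1) \<in> {a..b}"
          using grid_mem[OF ab N] k ij by auto
        have tab: "t \<in> {a..b}" using t mi by auto
        have zjk: "?z j \<le> ?z (k-1)" using grid_mono[OF ab N, of j "k-1"] k by auto
        have T1: "(t, ?z j) \<in> Tri a b" "(?z k, ?z j) \<in> Tri a b" using t mi zjk tab by (auto simp: Tri_def)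
        have nf: "norm (f (?z i') t - f (?z i') (?z k)) < \<eta> / (2 * R)"
          using hd1[of "(?z i', ?z k)" "(?z i', t)"] mi tab tk by (simp add: dist_Pair_Pair dist_norm)
        have dp: "dist (t, ?z j) (?z k, ?z j) < d2" using tk by (simp add: dist_Pair_Pair)
        have "dist ((\<lambda>(x,y). resolvent_kernel f x y) (t, ?z j)) ((\<lambda>(x,y). resolvent_kernel f x y) (?z k, ?z j)) < \<eta> / (2 * M)"
          using hd2 T1 dp by blast
        then have nr: "norm (resolvent_kernel f t (?z j) - resolvent_kernel f (?z k) (?z j)) < \<eta> / (2 * M)"
          by (simp add: dist_norm)
        have "f (?z i') t * resolvent_kernel f t (?z j) - f (?z i') (?z k) * resolvent_kernel f (?z k) (?z j)
            = (f (?z i') t - f (?z i') (?z k)) * resolvent_kernel f t (?z j)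
              + f (?z i') (?z k) * (resolvent_kernel f t (?z j) - resolvent_kernel f (?z k) (?z j))"
          by (simp add: algebra_simps)
        then have "norm (f (?z i') t * resolvent_kernel f t (?z j) - f (?z i') (?z k) * resolvent_kernel f (?z k) (?z j))
            \<le> norm (f (?z i') t - f (?z i') (?z k)) * norm (resolvent_kernel f t (?z j))
              + norm (f (?z i') (?z k)) * norm (resolvent_kernel f t (?z j) - resolvent_kernel f (?z k) (?z j))"
          by (metis norm_triangle_ineq norm_mult)
        also have "\<dots> \<le> \<eta> / (2 * R) * R + M * (\<eta> / (2 * M))"
          using nf nr rR[OF T1(1)] fM[OF mi(1,2)] Rpos Mpos \<eta>0 by (intro add_mono mult_mono) auto
        also have "\<dots> = \<eta>" using Rpos Mpos by (simp add: field_simps)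
        finally show ?thesis .
      qed
      have "norm (mat_inv (IdMinusF a b f N) $$ (i,j) / complex_of_real (dz a b N)
        - resolvent_kernel f (?z i) (?z j)) \<le> 2 * (2 * M * M * dz a b N + (b - a) * \<eta>) * C"
        unfolding C_def by (rule err_bound[OF ab fc Mpos fM N cM _ _ _ close]) (use ij \<eta>0 in auto)
      also have "\<dots> = 4 * M * M * dz a b N * C + \<epsilon> / 2" using e\<eta> by (simp add: algebra_simps)
      also have "\<dots> < \<epsilon>"
      proof -
        have "4 * M * M * dz a b N * C < 4 * M * M * (\<epsilon> / (8 * M * M * C)) * C"
          using elim(4) Mpos C0 by (intro mult_strict_right_mono mult_strict_left_mono) auto
        also have "\<dots> = \<epsilon> / 2" using Mpos C0 by (simp add: field_simps)
        finally show ?thesis by simp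
      qed
      finally show "norm (mat_inv (IdMinusF a b f N) $$ (i,j) / complex_of_real (dz a b N)
        - resolvent_kernel f (?z i) (?z j)) < \<epsilon>" .
    qed
  qed
qed

theorem mainTheorem1:
  fixes a b :: real and f :: "real \<Rightarrow> real \<Rightarrow> complex"
  assumes "a < b"
    and "continuous_on ({a..b} \<times> {a..b}) (\<lambda>(x, y). f x y)"
  shows "(\<forall>\<^sub>F N in sequentially. invertible_mat (IdMinusF a b f N)) \<and>
    (\<forall>x y. \<forall>i j :: nat \<Rightarrow> nat.
       a \<le> y \<and> y < x \<and> x \<le> b \<and>
       (\<forall>N\<ge>1. j N < i N \<and> i N \<le> N) \<and>
       (\<lambda>N. grid a b N (i N)) \<longlonglongrightarrow> x \<and>
       (\<lambda>N. grid a b N (j N)) \<longlonglongrightarrow> y \<longrightarrow>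
       (\<lambda>N. mat_inv (IdMinusF a b f N) $$ (i N, j N) / complex_of_real (dz a b N))
         \<longlonglongrightarrow> resolvent_kernel f x y)"
proof -
  note ab = assms(1) and fc = assms(2)
  have "compact ((\<lambda>(x,y). f x y) ` ({a..b} \<times> {a..b}))"
    by (rule compact_continuous_image[OF fc]) (intro compact_Times compact_Icc)
  then obtain M where Mpos: "M > 0" and M: "\<And>z. z \<in> (\<lambda>(x,y). f x y) ` ({a..b} \<times> {a..b}) \<Longrightarrow> norm z \<le> M"
    using compact_imp_bounded bounded_pos by metis
  have fM: "norm (f x y) \<le> M" if "x \<in> {a..b}" "y \<in> {a..b}" for x y
  proof -
    have "f x y \<in> (\<lambda>(x,y). f x y) ` ({a..b} \<times> {a..b})"
      using that by (intro image_eqI[where x="(x,y)"]) auto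
    then show ?thesis by (rule M)
  qed
  have "compact ((\<lambda>(x,y). resolvent_kernel f x y) ` Tri a b)"
    by (rule compact_continuous_image[OF r_cont[OF fc Mpos fM] compact_Tri])
  then obtain R where Rpos: "R > 0" and R: "\<And>z. z \<in> (\<lambda>(x,y). resolvent_kernel f x y) ` Tri a b \<Longrightarrow> norm z \<le> R"
    using compact_imp_bounded bounded_pos by metis
  have rR: "norm (resolvent_kernel f x y) \<le> R" if "(x,y) \<in> Tri a b" for x y
    using R[of "resolvent_kernel f x y"] that by force
  have evN: "\<forall>\<^sub>F N in sequentially. N \<ge> 1 \<and> dz a b N * M \<le> 1/2"
  proof -
    have "\<forall>\<^sub>F N in sequentially. dz a b N < 1 / (2 * M)" by (rule ev_small) (use Mpos in simp)
    moreover have "\<forall>\<^sub>F N in sequentially. N \<ge> 1" by (rule eventually_ge_at_top)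
    ultimately show ?thesis
      by eventually_elim (use Mpos in \<open>auto simp: field_simps\<close>)
  qed
  have part1: "\<forall>\<^sub>F N in sequentially. invertible_mat (IdMinusF a b f N)"
    using evN
  proof eventually_elim
    case (elim N)
    have "1 - complex_of_real (dz a b N) * f (grid a b N k) (grid a b N k) \<noteq> 0" if "k \<le> N" for k
      using nz_lemma[where f=f and M=M and N=N and k=k, OF ab _ _ fM that] elim by auto
    then show ?case by (rule mat_inv_facts(1))
  qed
  have part2: "(\<lambda>N. mat_inv (IdMinusF a b f N) $$ (i N, j N) / complex_of_real (dz a b N))
         \<longlonglongrightarrow> resolvent_kernel f x y"
    if h: "a \<le> y \<and> y < x \<and> x \<le> b \<and>
       (\<forall>N\<ge>1. j N < i N \<and> i N \<le> N) \<and>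
       (\<lambda>N. grid a b N (i N)) \<longlonglongrightarrow> x \<and>
       (\<lambda>N. grid a b N (j N)) \<longlonglongrightarrow> y" for x y and i j :: "nat \<Rightarrow> nat"
  proof -
    let ?u = "\<lambda>N. mat_inv (IdMinusF a b f N) $$ (i N, j N) / complex_of_real (dz a b N)"
    let ?v = "\<lambda>N. resolvent_kernel f (grid a b N (i N)) (grid a b N (j N))"
    have A1: "(\<lambda>N. ?u N - ?v N) \<longlonglongrightarrow> 0"
    proof (rule LIMSEQ_I)
      fix e :: real assume e: "e > 0"
      have "\<forall>\<^sub>F N in sequentially. (\<forall>i j. j < i \<and> i \<le> N \<longrightarrow>
          norm (mat_inv (IdMinusF a b f N) $$ (i,j) / complex_of_real (dz a b N)
            - resolvent_kernel f (grid a b N i) (grid a b N j)) < e) \<and> N \<ge> 1"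
        using unif_err[OF ab fc Mpos fM Rpos rR e] eventually_ge_at_top[of 1]
        by (simp add: eventually_conj_iff)
      then obtain N0 where N0: "\<And>N. N \<ge> N0 \<Longrightarrow> (\<forall>i j. j < i \<and> i \<le> N \<longrightarrow>
          norm (mat_inv (IdMinusF a b f N) $$ (i,j) / complex_of_real (dz a b N)
            - resolvent_kernel f (grid a b N i) (grid a b N j)) < e) \<and> N \<ge> 1"
        unfolding eventually_sequentially by blast
      show "\<exists>no. \<forall>n\<ge>no. norm (?u n - ?v n - 0) < e"
      proof (intro exI allI impI)
        fix n assume "n \<ge> N0"
        with N0 h show "norm (?u n - ?v n - 0) < e" by auto
      qed
    qed
    have A2: "?v \<longlonglongrightarrow> resolvent_kernel f x y"
    proof -
      have "((\<lambda>N. (grid a b N (i N), grid a b N (j N))) \<longlonglongrightarrow> (x, y))"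
        using h by (intro tendsto_Pair) auto
      moreover have "(x, y) \<in> Tri a b" using h by (auto simp: Tri_def)
      moreover have "\<forall>\<^sub>F N in sequentially. (grid a b N (i N), grid a b N (j N)) \<in> Tri a b"
        using eventually_ge_at_top[of 1]
      proof eventually_elim
        case (elim N)
        with h have ij: "j N < i N" "i N \<le> N" by auto
        then show ?case using grid_mem[OF ab elim, of "i N"] grid_mem[OF ab elim, of "j N"]
            grid_mono[OF ab elim, of "j N" "i N"] by (auto simp: Tri_def)
      qed
      ultimately have "((\<lambda>N. (\<lambda>(x,y). resolvent_kernel f x y) (grid a b N (i N), grid a b N (j N)))
          \<longlonglongrightarrow> (\<lambda>(x,y). resolvent_kernel f x y) (x, y))"
        by (intro continuous_on_tendsto_compose[OF r_cont[OF fc Mpos fM]])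
      then show ?thesis by simp
    qed
    have "(\<lambda>N. (?u N - ?v N) + ?v N) \<longlonglongrightarrow> 0 + resolvent_kernel f x y"
      by (intro tendsto_add A1 A2)
    then show ?thesis by simp
  qed
  show ?thesis using part1 part2 by blast
qed

end
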